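(* Let $\mathbf{X}$, $\mathbf{A}$ be $\sigma$-structures, let $k\ge1$, and let $r$ be the maximum arity of a relation symbol in $\sigma$. Then: (1) if $\mathbb{P}^k\ne\emptyset$ and $r\le k$, then $\mathrm{SA}^k(\mathbf{X},\mathbf{A})$ is feasible; (2) if $\mathrm{SA}^{k+r-1}(\mathbf{X},\mathbf{A})$ is feasible, then $\mathbb{P}^k\ne\emptyset$.
   Context: A signature $\sigma$ is a finite set of relation symbols with arities $\operatorname{ar}(R)\ge1$; a $\sigma$-structure has finite universe and relations $R^\mathbf{A}\subseteq A^{\operatorname{ar}(R)}$. Constraints: $\mathcal{C}_\mathbf{X}=\{R(\mathbf{x}):R\in\sigma,\mathbf{x}\in R^\mathbf{X}\}$; $\{\mathbf{x}\}$ is the set of entries of a tuple $\mathbf{x}$. $\mathrm{SA}^k(\mathbf{X},\mathbf{A})$: variables $p_V(f)\in[0,1]$ ($V\subseteq X$, $1\le|V|\le k$, $f:V\to A$) and $p_{R(\mathbf{x})}(f)\in[0,1]$ ($R(\mathbf{x})\in\mathcal{C}_\mathbf{X}$, $f:\{\mathbf{x}\}\to A$); constraints $\sum_{f:V\to A}p_V(f)=1$; $p_U(f)=\sum_{g:V\to A,g|_U=f}p_V(g)$ for $\emptyset\ne U\subseteq V\subseteq X$, $|V|\le k$; $p_U(f)=\sum_{g:\{\mathbf{x}\}\to A,g|_U=f}p_{R(\mathbf{x})}(g)$ for $R(\mathbf{x})\in\mathcal{C}_\mathbf{X}$, $\emptyset\ne U\subseteq\{\mathbf{x}\}$, $|U|\le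 k$; $p_{R(\mathbf{x})}(f)=0$ if $f(\mathbf{x})\notin R^\mathbf{A}$. Feasible means a (rational) solution exists. The polytope $\mathbb{P}=\mathbb{P}(\mathbf{X},\mathbf{A})\subseteq[0,1]^{X\times A}$ has variables $y_{x,a}\in[0,1]$ subject to $\sum_{a\in A}y_{x,a}=1$ for each $x\in X$, and $\sum_{x\in\{\mathbf{x}\}}y_{x,f(x)}\le|\{\mathbf{x}\}|-1$ for each $R\in\sigma$, $\mathbf{x}\in R^\mathbf{X}$ and $f:\{\mathbf{x}\}\to A$ with $f(\mathbf{x})\notin R^\mathbf{A}$. Sherali–Adams: writing $\mathbb{P}=\{\mathbf{y}\in\mathbb{R}^n: M\mathbf{y}\ge\mathbf{b},\ 0\le\mathbf{y}\le1\}$ (equalities as pairs of inequalities), multiply each inequality of $M\mathbf{y}\ge\mathbf{b}$ by every term $\prod_{i\in I}y_i\prod_{j\in J}(1-y_j)$ with $I\cap J=\emptyset$, $|I\cup J|\le k-1$; linearize by replacing each $y_i^2$ by $y_i$ and each monomial $\prod_{i\in K}y_i$ by a new variable $z_K$, obtaining a polytope $\mathbb{P}^k_L$; then $\mathbb{P}^k=\{\mathbf{y}\in\mathbb{R}^n:\exists\mathbf{z}\in\mathbb{P}^k_L\text{ with }z_{\{i\}}=y_i\ \forall i\}$. *)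

theory Defs
  imports Complex_Main "HOL-Library.FuncSet"
begin

definition signature :: "'r set \<Rightarrow> ('r \<Rightarrow> nat) \<Rightarrow> bool" where
  "signature sig ar \<longleftrightarrow> finite sig \<and> (\<forall>R\<in>sig. 1 \<le> ar R)"

record ('r, 'a) sstruct =
  univ :: "'a set"
  rels :: "'r \<Rightarrow> 'a list set"

definition is_struct :: "'r set \<Rightarrow> ('r \<Rightarrow> nat) \<Rightarrow> ('r, 'a) sstruct \<Rightarrow> bool" where
  "is_struct sig ar S \<longleftrightarrow> finite (univ S) \<and>
     (\<forall>R\<in>sig. \<forall>xs\<in>rels S R. length xs = ar R \<and> set xs \<subseteq> univ S)"

text \<open>Maximum arity (the default value 1 only matters for the empty signature).\<close>
definition max_arity :: "'r set \<Rightarrow> ('r \<Rightarrow> nat) \<Rightarrow> nat" where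
  "max_arity sig ar = Max (insert 1 (ar ` sig))"

text \<open>p V f stands for p_V(f) (V a subset of the universe of X, 1 <= |V| <= k, f : V -> A
  extensional), q R xs f stands for p_{R(xs)}(f) (f : set xs -> A extensional).\<close>
definition sa_feasible ::
  "'r set \<Rightarrow> ('r, 'a) sstruct \<Rightarrow> ('r, 'b) sstruct \<Rightarrow> nat \<Rightarrow> bool" where
  "sa_feasible sig X A k \<longleftrightarrow>
    (\<exists>(p :: 'a set \<Rightarrow> ('a \<Rightarrow> 'b) \<Rightarrow> real) (q :: 'r \<Rightarrow> 'a list \<Rightarrow> ('a \<Rightarrow> 'b) \<Rightarrow> real).
      (\<forall>V f. V \<subseteq> univ X \<and> 1 \<le> card V \<and> card V \<le> k \<and> f \<in> V \<rightarrow>\<^sub>E univ A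
          \<longrightarrow> 0 \<le> p V f \<and> p V f \<le> 1) \<and>
      (\<forall>R xs f. R \<in> sig \<and> xs \<in> rels X R \<and> f \<in> set xs \<rightarrow>\<^sub>E univ A
          \<longrightarrow> 0 \<le> q R xs f \<and> q R xs f \<le> 1) \<and>
      (\<forall>V. V \<subseteq> univ X \<and> 1 \<le> card V \<and> card V \<le> k
          \<longrightarrow> (\<Sum>f\<in>V \<rightarrow>\<^sub>E univ A. p V f) = 1) \<and>
      (\<forall>U V f. U \<noteq> {} \<and> U \<subseteq> V \<and> V \<subseteq> univ X \<and> card V \<le> k \<and> f \<in> U \<rightarrow>\<^sub>E univ A
          \<longrightarrow> p U f = (\<Sum>g\<in>{g \<in> V \<rightarrow>\<^sub>E univ A. restrict g U = f}. p V g)) \<and>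
      (\<forall>R xs U f. R \<in> sig \<and> xs \<in> rels X R \<and> U \<noteq> {} \<and> U \<subseteq> set xs \<and> card U \<le> k
          \<and> f \<in> U \<rightarrow>\<^sub>E univ A
          \<longrightarrow> p U f = (\<Sum>g\<in>{g \<in> set xs \<rightarrow>\<^sub>E univ A. restrict g U = f}. q R xs g)) \<and>
      (\<forall>R xs f. R \<in> sig \<and> xs \<in> rels X R \<and> f \<in> set xs \<rightarrow>\<^sub>E univ A
          \<and> map f xs \<notin> rels A R \<longrightarrow> q R xs f = 0))"

text \<open>A linear inequality over the finite variable set N is a pair (c, b) meaning
  sum_{l in N} c l * y l >= b.  A linearised monomial prod_{i in K} y_i is z K, where the
  empty monomial is the constant 1.\<close>
definition mono :: "('i set \<Rightarrow> real) \<Rightarrow> 'i set \<Rightarrow> real" where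
  "mono z K = (if K = {} then 1 else z K)"

text \<open>Multiplying (sum_l c l * y l - b >= 0) by prod_{i in I} y_i prod_{j in J} (1 - y_j)
  = sum_{S subseteq J} (-1)^|S| prod_{i in I union S} y_i and linearising
  (y_i^2 = y_i, prod_{i in K} y_i = z_K).\<close>
definition sa_lift_L :: "'i set \<Rightarrow> (('i \<Rightarrow> real) \<times> real) set \<Rightarrow> nat \<Rightarrow> ('i set \<Rightarrow> real) set" where
  "sa_lift_L N ineqs k = {z. \<forall>(c, b)\<in>ineqs. \<forall>I J. I \<subseteq> N \<and> J \<subseteq> N \<and> I \<inter> J = {}
      \<and> card (I \<union> J) \<le> k - 1 \<longrightarrow>
      0 \<le> (\<Sum>S\<in>Pow J. (-1) ^ card S *
              ((\<Sum>l\<in>N. c l * mono z (I \<union> S \<union> {l})) - b * mono z (I \<union> S)))}"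

definition sa_lift :: "'i set \<Rightarrow> (('i \<Rightarrow> real) \<times> real) set \<Rightarrow> nat \<Rightarrow> ('i \<Rightarrow> real) set" where
  "sa_lift N ineqs k = {y. (\<forall>i. i \<notin> N \<longrightarrow> y i = 0) \<and>
      (\<exists>z\<in>sa_lift_L N ineqs k. \<forall>i\<in>N. z {i} = y i)}"

text \<open>The inequality system: each equality
  sum_a y_{x,a} = 1 as two inequalities, each constraint inequality
  sum_{x in {xs}} y_{x,f x} <= |{xs}| - 1 (written as a >= inequality), and the bounds
  0 <= y <= 1 (as y_i >= 0 and -y_i >= -1).\<close>
definition poly_ineqs ::
  "'r set \<Rightarrow> ('r, 'a) sstruct \<Rightarrow> ('r, 'b) sstruct \<Rightarrow> ((('a \<times> 'b) \<Rightarrow> real) \<times> real) set" where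
  "poly_ineqs sig X A =
     {((\<lambda>(x', a). if x' = x then 1 else 0), 1) | x. x \<in> univ X}
   \<union> {((\<lambda>(x', a). if x' = x then -1 else 0), -1) | x. x \<in> univ X}
   \<union> {((\<lambda>(x', a). if x' \<in> set xs \<and> a = f x' then -1 else 0), - (real (card (set xs)) - 1))
        | R xs f. R \<in> sig \<and> xs \<in> rels X R \<and> f \<in> set xs \<rightarrow>\<^sub>E univ A \<and> map f xs \<notin> rels A R}
   \<union> {((\<lambda>j. if j = i then 1 else 0), 0) | i. i \<in> univ X \<times> univ A}
   \<union> {((\<lambda>j. if j = i then -1 else 0), -1) | i. i \<in> univ X \<times> univ A}"

definition polytope_P :: "'r set \<Rightarrow> ('r, 'a) sstruct \<Rightarrow> ('r, 'b) sstruct \<Rightarrow> ('a \<times> 'b \<Rightarrow> real) set" where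
  "polytope_P sig X A = {y. (\<forall>i. i \<notin> univ X \<times> univ A \<longrightarrow> y i = 0) \<and>
      (\<forall>(c, b)\<in>poly_ineqs sig X A. (\<Sum>l\<in>univ X \<times> univ A. c l * y l) \<ge> b)}"

definition polytope_SA :: "'r set \<Rightarrow> ('r, 'a) sstruct \<Rightarrow> ('r, 'b) sstruct \<Rightarrow> nat \<Rightarrow> ('a \<times> 'b \<Rightarrow> real) set" where
  "polytope_SA sig X A k = sa_lift (univ X \<times> univ A) (poly_ineqs sig X A) k"

end

theory Submission
  imports Defs
begin

lemma mem_eq1: "x \<in> univ X \<Longrightarrow> ((\<lambda>(x', a). if x' = x then 1 else 0), 1) \<in> poly_ineqs sig X A"
  unfolding poly_ineqs_def by (rule UnI1, rule UnI1, rule UnI1, rule UnI1) blast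
lemma mem_eq2: "x \<in> univ X \<Longrightarrow> ((\<lambda>(x', a). if x' = x then -1 else 0), -1) \<in> poly_ineqs sig X A"
  unfolding poly_ineqs_def by (rule UnI1, rule UnI1, rule UnI1, rule UnI2) blast
lemma mem_con: "R \<in> sig \<Longrightarrow> xs \<in> rels X R \<Longrightarrow> f \<in> set xs \<rightarrow>\<^sub>E univ A \<Longrightarrow> map f xs \<notin> rels A R \<Longrightarrow>
   ((\<lambda>(x', a). if x' \<in> set xs \<and> a = f x' then -1 else 0), - (real (card (set xs)) - 1)) \<in> poly_ineqs sig X A"
  unfolding poly_ineqs_def by (rule UnI1, rule UnI1, rule UnI2) blast
lemma mem_b1: "i \<in> univ X \<times> univ A \<Longrightarrow> ((\<lambda>j. if j = i then 1 else 0), 0) \<in> poly_ineqs sig X A"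
  unfolding poly_ineqs_def by (rule UnI1, rule UnI2) blast
lemma mem_b2: "i \<in> univ X \<times> univ A \<Longrightarrow> ((\<lambda>j. if j = i then -1 else 0), -1) \<in> poly_ineqs sig X A"
  unfolding poly_ineqs_def by (rule UnI2) blast

lemma lift0:
  assumes z: "z \<in> sa_lift_L N ineqs k" and cb: "(c, b) \<in> ineqs" and I: "I \<subseteq> N" "card I \<le> k - 1"
  shows "0 \<le> (\<Sum>l\<in>N. c l * mono z (I \<union> {l})) - b * mono z I"
proof -
  have H: "\<forall>(c, b)\<in>ineqs. \<forall>I J. I \<subseteq> N \<and> J \<subseteq> N \<and> I \<inter> J = {}
      \<and> card (I \<union> J) \<le> k - 1 \<longrightarrow>
      0 \<le> (\<Sum>S\<in>Pow J. (-1) ^ card S *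
              ((\<Sum>l\<in>N. c l * mono z (I \<union> S \<union> {l})) - b * mono z (I \<union> S)))"
    using z unfolding sa_lift_L_def by (rule CollectD)
  have H2: "\<forall>I J. I \<subseteq> N \<and> J \<subseteq> N \<and> I \<inter> J = {}
      \<and> card (I \<union> J) \<le> k - 1 \<longrightarrow>
      0 \<le> (\<Sum>S\<in>Pow J. (-1) ^ card S *
              ((\<Sum>l\<in>N. c l * mono z (I \<union> S \<union> {l})) - b * mono z (I \<union> S)))"
    using bspec[OF H cb] by (simp only: prod.case)
  have "0 \<le> (\<Sum>S\<in>Pow {}. (-1) ^ card S *
              ((\<Sum>l\<in>N. c l * mono z (I \<union> S \<union> {l})) - b * mono z (I \<union> S)))"
    using I by (intro H2[rule_format]) auto
  then show ?thesis by simp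
qed

lemma sum_row:
  fixes h :: "'a \<times> 'b \<Rightarrow> real"
  assumes "x \<in> SX" "finite SX" "finite SA"
  shows "(\<Sum>l\<in>SX \<times> SA. (case l of (x', a) \<Rightarrow> if x' = x then t else 0) * h l) = t * (\<Sum>a\<in>SA. h (x, a))"
proof -
  have "(\<Sum>l\<in>SX \<times> SA. (case l of (x', a) \<Rightarrow> if x' = x then t else 0) * h l)
     = (\<Sum>x'\<in>SX. \<Sum>a\<in>SA. (if x' = x then t else 0) * h (x', a))"
    by (simp add: sum.cartesian_product split_def)
  also have "\<dots> = (\<Sum>x'\<in>SX. if x' = x then (\<Sum>a\<in>SA. t * h (x, a)) else 0)"
    by (rule sum.cong) auto
  also have "\<dots> = t * (\<Sum>a\<in>SA. h (x, a))" using assms by (simp add: sum_distrib_left)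
  finally show ?thesis .
qed

lemma z_nonneg:
  assumes z: "z \<in> sa_lift_L (univ X \<times> univ A) (poly_ineqs sig X A) k"
    and fin: "finite (univ X)" "finite (univ A)"
    and K: "K \<subseteq> univ X \<times> univ A" "K \<noteq> {}" "card K \<le> k"
  shows "0 \<le> z K"
proof -
  obtain i where i: "i \<in> K" using K by blast
  have fK: "finite K" using K fin by (meson finite_SigmaI finite_subset)
  have ci: "card (K - {i}) \<le> k - 1" using K i fK by (simp add: card_Diff_singleton)
  have mem: "((\<lambda>j. if j = i then 1 else 0), 0) \<in> poly_ineqs sig X A"
    using i K by (intro mem_b1) auto
  have "0 \<le> (\<Sum>l\<in>univ X \<times> univ A. (if l = i then 1 else 0) * mono z ((K - {i}) \<union> {l})) - 0 * mono z (K - {i})"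
    using lift0[OF z mem _ ci] K by auto
  also have "\<dots> = mono z ((K - {i}) \<union> {i})"
  proof -
    have "(\<Sum>l\<in>univ X \<times> univ A. (if l = i then 1 else 0) * mono z ((K - {i}) \<union> {l}))
        = (\<Sum>l\<in>univ X \<times> univ A. (if l = i then mono z ((K - {i}) \<union> {l}) else 0))"
      by (rule sum.cong) auto
    also have "\<dots> = mono z ((K - {i}) \<union> {i})" using i K fin by (subst sum.delta) auto
    finally show ?thesis by simp
  qed
  also have "(K - {i}) \<union> {i} = K" using i by auto
  finally show ?thesis using K by (simp add: mono_def)
qed

definition gr :: "'x set \<Rightarrow> ('x \<Rightarrow> 'y) \<Rightarrow> ('x \<times> 'y) set" where
  "gr V f = (\<lambda>x. (x, f x)) ` V"

lemma z_marg:
  assumes z: "z \<in> sa_lift_L (univ X \<times> univ A) (poly_ineqs sig X A) k"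
    and fin: "finite (univ X)" "finite (univ A)"
    and K: "K \<subseteq> univ X \<times> univ A" "card K \<le> k - 1" and x: "x \<in> univ X"
  shows "(\<Sum>a\<in>univ A. mono z (insert (x, a) K)) = mono z K"
proof -
  have mem1: "((\<lambda>(x', a). if x' = x then 1 else 0), 1) \<in> poly_ineqs sig X A"
    using x by (rule mem_eq1)
  have mem2: "((\<lambda>(x', a). if x' = x then -1 else 0), -1) \<in> poly_ineqs sig X A"
    using x by (rule mem_eq2)
  have e1: "(\<Sum>l\<in>univ X \<times> univ A. (case l of (x', a) \<Rightarrow> if x' = x then t else 0) * mono z (K \<union> {l}))
     = t * (\<Sum>a\<in>univ A. mono z (insert (x, a) K))" for t
    using sum_row[OF x fin, of t "\<lambda>l. mono z (K \<union> {l})"] by simp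
  have "0 \<le> (\<Sum>l\<in>univ X \<times> univ A. (case l of (x', a) \<Rightarrow> if x' = x then 1 else 0) * mono z (K \<union> {l})) - 1 * mono z K"
    using lift0[OF z mem1 K] by simp
  moreover have "0 \<le> (\<Sum>l\<in>univ X \<times> univ A. (case l of (x', a) \<Rightarrow> if x' = x then -1 else 0) * mono z (K \<union> {l})) - (-1) * mono z K"
    using lift0[OF z mem2 K] by simp
  ultimately show ?thesis unfolding e1 by simp
qed

lemma z_zero:
  assumes z: "z \<in> sa_lift_L (univ X \<times> univ A) (poly_ineqs sig X A) k"
    and fin: "finite (univ X)" "finite (univ A)"
    and R: "R \<in> sig" "xs \<in> rels X R" "f \<in> set xs \<rightarrow>\<^sub>E univ A" "map f xs \<notin> rels A R"
      "set xs \<noteq> {}" "set xs \<subseteq> univ X" "card (set xs) \<le> k"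
  shows "z (gr (set xs) f) = 0"
proof -
  define K where "K = gr (set xs) f"
  have KN: "K \<subseteq> univ X \<times> univ A" using R unfolding K_def gr_def by auto
  have cK: "card K = card (set xs)" unfolding K_def gr_def
    by (rule card_image) (auto simp: inj_on_def)
  obtain x0 where x0: "x0 \<in> set xs" using R(5) by (meson ex_in_conv)
  define i0 where "i0 = (x0, f x0)"
  have i0K: "i0 \<in> K" unfolding K_def gr_def i0_def using x0 by auto
  define I where "I = K - {i0}"
  have fK: "finite K" using KN fin by (meson finite_SigmaI finite_subset)
  have K1: "card K \<ge> 1" using i0K fK by (metis One_nat_def Suc_leI card_gt_0_iff empty_iff)
  have cI: "card I = card K - 1" unfolding I_def using i0K fK by simp
  have IN: "I \<subseteq> univ X \<times> univ A" using KN I_def by auto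
  have cIk: "card I \<le> k - 1" using cI cK R by simp
  define c where "c = (\<lambda>(x', a). if x' \<in> set xs \<and> a = f x' then -1 else (0::real))"
  define b where "b = - (real (card (set xs)) - 1)"
  have mem: "(c, b) \<in> poly_ineqs sig X A"
    unfolding c_def b_def using R(1-4) by (rule mem_con)
  have cl: "c l = (if l \<in> K then -1 else 0)" for l
    unfolding c_def K_def gr_def by (cases l) auto
  have "(\<Sum>l\<in>univ X \<times> univ A. c l * mono z (I \<union> {l}))
      = (\<Sum>l\<in>univ X \<times> univ A. if l \<in> K then - mono z (I \<union> {l}) else 0)"
    by (rule sum.cong) (auto simp: cl)
  also have "\<dots> = (\<Sum>l\<in>(univ X \<times> univ A) \<inter> K. - mono z (I \<union> {l}))"
    using fin by (subst sum.inter_restrict) auto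
  also have "(univ X \<times> univ A) \<inter> K = K" using KN by auto
  also have "(\<Sum>l\<in>K. - mono z (I \<union> {l})) = - mono z (I \<union> {i0}) + (\<Sum>l\<in>I. - mono z (I \<union> {l}))"
    unfolding I_def using fK i0K by (simp add: sum.remove)
  also have "(\<Sum>l\<in>I. - mono z (I \<union> {l})) = (\<Sum>l\<in>I. - mono z I)"
    by (rule sum.cong) (auto simp: insert_absorb)
  also have "I \<union> {i0} = K" unfolding I_def using i0K by auto
  finally have eq: "(\<Sum>l\<in>univ X \<times> univ A. c l * mono z (I \<union> {l})) = - mono z K - real (card I) * mono z I"
    by simp
  have "0 \<le> (\<Sum>l\<in>univ X \<times> univ A. c l * mono z (I \<union> {l})) - b * mono z I"
    using lift0[OF z mem IN cIk] .
  then have "0 \<le> - mono z K - real (card I) * mono z I + (real (card K) - 1) * mono z I"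
    unfolding eq b_def cK by (simp add: algebra_simps)
  moreover have "real (card I) = real (card K) - 1" using cI K1 by simp
  ultimately have "mono z K \<le> 0" by simp
  moreover have "0 \<le> z K" using z_nonneg[OF z fin KN] i0K cK R by auto
  ultimately show ?thesis using i0K unfolding K_def mono_def by (auto split: if_splits)
qed

lemma z_marg_set:
  assumes z: "z \<in> sa_lift_L (univ X \<times> univ A) (poly_ineqs sig X A) k"
    and fin: "finite (univ X)" "finite (univ A)"
    and D: "D \<subseteq> univ X" and K: "K \<subseteq> univ X \<times> univ A" "fst ` K \<inter> D = {}" "card K + card D \<le> k"
  shows "(\<Sum>h\<in>D \<rightarrow>\<^sub>E univ A. mono z (K \<union> gr D h)) = mono z K"
proof -
  have "finite D" using D fin finite_subset by blast
  from this D K(2,3) show ?thesis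
  proof (induction D rule: finite_induct)
    case empty
    then show ?case by (simp add: gr_def)
  next
    case (insert x D)
    have fK: "finite K" using K fin by (meson finite_SigmaI finite_subset)
    have "(\<Sum>h\<in>insert x D \<rightarrow>\<^sub>E univ A. mono z (K \<union> gr (insert x D) h))
       = (\<Sum>(a, h)\<in>univ A \<times> (D \<rightarrow>\<^sub>E univ A). mono z (K \<union> gr (insert x D) (h(x := a))))"
      unfolding PiE_insert_eq using insert.hyps
      by (subst sum.reindex[OF inj_combinator[of x D "\<lambda>_. univ A"]]) (simp_all add: o_def case_prod_unfold)
    also have "\<dots> = (\<Sum>a\<in>univ A. \<Sum>h\<in>D \<rightarrow>\<^sub>E univ A. mono z (insert (x, a) (K \<union> gr D h)))"
    proof -
      have gi: "gr (insert x D) (h(x := a)) = insert (x, a) (gr D h)" for h a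
        using insert.hyps unfolding gr_def by auto
      have "(\<Sum>(a, h)\<in>univ A \<times> (D \<rightarrow>\<^sub>E univ A). mono z (K \<union> gr (insert x D) (h(x := a))))
        = (\<Sum>(a, h)\<in>univ A \<times> (D \<rightarrow>\<^sub>E univ A). mono z (insert (x, a) (K \<union> gr D h)))"
        by (rule sum.cong) (auto simp: gi)
      also have "\<dots> = (\<Sum>a\<in>univ A. \<Sum>h\<in>D \<rightarrow>\<^sub>E univ A. mono z (insert (x, a) (K \<union> gr D h)))"
        by (rule sym, rule sum.cartesian_product)
      finally show ?thesis .
    qed
    also have "\<dots> = (\<Sum>h\<in>D \<rightarrow>\<^sub>E univ A. \<Sum>a\<in>univ A. mono z (insert (x, a) (K \<union> gr D h)))"
      by (rule sum.swap)
    also have "\<dots> = (\<Sum>h\<in>D \<rightarrow>\<^sub>E univ A. mono z (K \<union> gr D h))"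
    proof (rule sum.cong)
      fix h assume h: "h \<in> D \<rightarrow>\<^sub>E univ A"
      have sub: "K \<union> gr D h \<subseteq> univ X \<times> univ A" using h insert.prems K unfolding gr_def by auto
      have "card (K \<union> gr D h) \<le> card K + card (gr D h)" by (rule card_Un_le)
      also have "card (gr D h) \<le> card D" unfolding gr_def by (rule card_image_le) fact
      finally have "card (K \<union> gr D h) \<le> k - 1" using insert.prems insert.hyps by simp
      then show "(\<Sum>a\<in>univ A. mono z (insert (x, a) (K \<union> gr D h))) = mono z (K \<union> gr D h)"
        using z_marg[OF z fin sub] insert.prems by auto
    qed simp
    also have "\<dots> = mono z K"
      using insert.IH insert.prems insert.hyps by auto
    finally show ?case .
  qed
qed

lemma z_marg_restrict:
  assumes z: "z \<in> sa_lift_L (univ X \<times> univ A) (poly_ineqs sig X A) k"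
    and fin: "finite (univ X)" "finite (univ A)"
    and UV: "U \<subseteq> V" "V \<subseteq> univ X" "card V \<le> k" and f: "f \<in> U \<rightarrow>\<^sub>E univ A"
  shows "mono z (gr U f) = (\<Sum>g\<in>{g \<in> V \<rightarrow>\<^sub>E univ A. restrict g U = f}. mono z (gr V g))"
proof -
  have fV: "finite V" using UV fin finite_subset by blast
  have cU: "card (gr U f) \<le> card U" unfolding gr_def using fV UV finite_subset by (blast intro: card_image_le)
  have "card U + card (V - U) = card V" using fV UV by (metis card_Diff_subset finite_subset le_add_diff_inverse card_mono)
  then have ck: "card (gr U f) + card (V - U) \<le> k" using cU UV by linarith
  have p1: "V - U \<subseteq> univ X" using UV by auto
  have p2: "gr U f \<subseteq> univ X \<times> univ A" using UV f unfolding gr_def by auto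
  have p3: "fst ` gr U f \<inter> (V - U) = {}" unfolding gr_def by auto
  have "mono z (gr U f) = (\<Sum>h\<in>(V - U) \<rightarrow>\<^sub>E univ A. mono z (gr U f \<union> gr (V - U) h))"
    by (rule sym, rule z_marg_set[OF z fin p1 p2 p3 ck])
  also have "\<dots> = (\<Sum>g\<in>{g \<in> V \<rightarrow>\<^sub>E univ A. restrict g U = f}. mono z (gr V g))"
  proof (rule sum.reindex_bij_witness[where j = "\<lambda>h x. if x \<in> U then f x else h x" and i = "\<lambda>g. restrict g (V - U)"])
    fix h assume h: "h \<in> (V - U) \<rightarrow>\<^sub>E univ A"
    show "restrict (\<lambda>x. if x \<in> U then f x else h x) (V - U) = h"
      using h by (auto simp: restrict_def PiE_def extensional_def fun_eq_iff)
    show "(\<lambda>x. if x \<in> U then f x else h x) \<in> {g \<in> V \<rightarrow>\<^sub>E univ A. restrict g U = f}"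
      using h f UV by (auto simp: restrict_def PiE_def extensional_def fun_eq_iff Pi_def)
    show "mono z (gr V (\<lambda>x. if x \<in> U then f x else h x)) = mono z (gr U f \<union> gr (V - U) h)"
    proof -
      have "gr V (\<lambda>x. if x \<in> U then f x else h x) = gr U f \<union> gr (V - U) h"
        using UV unfolding gr_def by auto
      then show ?thesis by simp
    qed
  next
    fix g assume g: "g \<in> {g \<in> V \<rightarrow>\<^sub>E univ A. restrict g U = f}"
    show "restrict g (V - U) \<in> (V - U) \<rightarrow>\<^sub>E univ A" using g by auto
    show "(\<lambda>x. if x \<in> U then f x else restrict g (V - U) x) = g"
    proof
      fix x
      have r: "restrict g U x = f x" using g by simp
      show "(if x \<in> U then f x else restrict g (V - U) x) = g x"
      proof (cases "x \<in> U")
        case True then show ?thesis using r by simp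
      next
        case False then show ?thesis using g UV by (auto simp: restrict_def PiE_def extensional_def)
      qed
    qed
  qed
  finally show ?thesis .
qed

lemma struct_fin: "is_struct sig ar S \<Longrightarrow> finite (univ S)"
  by (simp add: is_struct_def)

lemma arity_le:
  assumes "signature sig ar" "R \<in> sig" shows "ar R \<le> max_arity sig ar" "1 \<le> max_arity sig ar"
  using assms unfolding max_arity_def signature_def by (auto intro: Max_ge)

lemma rel_facts:
  assumes sig: "signature sig ar" and sX: "is_struct sig ar X" and R: "R \<in> sig" "xs \<in> rels X R"
  shows "set xs \<subseteq> univ X" "set xs \<noteq> {}" "card (set xs) \<le> max_arity sig ar"
proof -
  have l: "length xs = ar R" "set xs \<subseteq> univ X" using sX R unfolding is_struct_def by auto
  then show "set xs \<subseteq> univ X" by simp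
  have "1 \<le> ar R" using sig R unfolding signature_def by auto
  then show "set xs \<noteq> {}" using l by auto
  show "card (set xs) \<le> max_arity sig ar" using card_length[of xs] l arity_le[OF sig R(1)] by simp
qed

lemma sa_intro:
  fixes p :: "'a set \<Rightarrow> ('a \<Rightarrow> 'b) \<Rightarrow> real" and q :: "'r \<Rightarrow> 'a list \<Rightarrow> ('a \<Rightarrow> 'b) \<Rightarrow> real"
    and X :: "('r, 'a) sstruct" and A :: "('r, 'b) sstruct"
  assumes c1: "\<forall>V f. V \<subseteq> univ X \<and> 1 \<le> card V \<and> card V \<le> k \<and> f \<in> V \<rightarrow>\<^sub>E univ A
          \<longrightarrow> 0 \<le> p V f \<and> p V f \<le> 1"
  and c2: "\<forall>R xs f. R \<in> sig \<and> xs \<in> rels X R \<and> f \<in> set xs \<rightarrow>\<^sub>E univ A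
          \<longrightarrow> 0 \<le> q R xs f \<and> q R xs f \<le> 1"
  and c3: "\<forall>V. V \<subseteq> univ X \<and> 1 \<le> card V \<and> card V \<le> k
          \<longrightarrow> (\<Sum>f\<in>V \<rightarrow>\<^sub>E univ A. p V f) = 1"
  and c4: "\<forall>U V f. U \<noteq> {} \<and> U \<subseteq> V \<and> V \<subseteq> univ X \<and> card V \<le> k \<and> f \<in> U \<rightarrow>\<^sub>E univ A
          \<longrightarrow> p U f = (\<Sum>g\<in>{g \<in> V \<rightarrow>\<^sub>E univ A. restrict g U = f}. p V g)"
  and c5: "\<forall>R xs U f. R \<in> sig \<and> xs \<in> rels X R \<and> U \<noteq> {} \<and> U \<subseteq> set xs \<and> card U \<le> k
          \<and> f \<in> U \<rightarrow>\<^sub>E univ A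
          \<longrightarrow> p U f = (\<Sum>g\<in>{g \<in> set xs \<rightarrow>\<^sub>E univ A. restrict g U = f}. q R xs g)"
  and c6: "\<forall>R xs f. R \<in> sig \<and> xs \<in> rels X R \<and> f \<in> set xs \<rightarrow>\<^sub>E univ A
          \<and> map f xs \<notin> rels A R \<longrightarrow> q R xs f = 0"
  shows "sa_feasible sig X A k"
  unfolding sa_feasible_def
  apply (rule exI[of _ p], rule exI[of _ q])
  using c1 c2 c3 c4 c5 c6 by (intro conjI)

lemma part1:
  fixes sig :: "'r set" and X :: "('r, 'x) sstruct" and A :: "('r, 'y) sstruct"
  assumes sig: "signature sig ar" and sX: "is_struct sig ar X" and sA: "is_struct sig ar A"
    and y: "y \<in> polytope_SA sig X A k" and r: "max_arity sig ar \<le> k"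
  shows "sa_feasible sig X A k"
proof -
  have fin: "finite (univ X)" "finite (univ A)" using sX sA by (simp_all add: struct_fin)
  obtain z where z: "z \<in> sa_lift_L (univ X \<times> univ A) (poly_ineqs sig X A) k"
    using y unfolding polytope_SA_def sa_lift_def by auto
  define p where "p = (\<lambda>V f. mono z (gr V f))"
  define q where "q = (\<lambda>(R::'r) xs f. p (set xs) f)"
  have P0: "0 \<le> p V f" if "V \<subseteq> univ X" "V \<noteq> {}" "card V \<le> k" "f \<in> V \<rightarrow>\<^sub>E univ A" for V f
  proof -
    have fV: "finite V" using that fin finite_subset by blast
    have s: "gr V f \<subseteq> univ X \<times> univ A" "gr V f \<noteq> {}" using that unfolding gr_def by auto
    have "card (gr V f) \<le> k" using card_image_le[OF fV, of "\<lambda>x. (x, f x)"] that unfolding gr_def by simp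
    then show ?thesis using z_nonneg[OF z fin s(1) s(2)] s unfolding p_def mono_def by simp
  qed
  have MR: "p U f = (\<Sum>g\<in>{g \<in> V \<rightarrow>\<^sub>E univ A. restrict g U = f}. p V g)"
    if "U \<subseteq> V" "V \<subseteq> univ X" "card V \<le> k" "f \<in> U \<rightarrow>\<^sub>E univ A" for U V f
    unfolding p_def by (rule z_marg_restrict[OF z fin that])
  have PS: "(\<Sum>f\<in>V \<rightarrow>\<^sub>E univ A. p V f) = 1" if "V \<subseteq> univ X" "card V \<le> k" for V
  proof -
    have "p {} (\<lambda>_. undefined) = (\<Sum>g\<in>{g \<in> V \<rightarrow>\<^sub>E univ A. restrict g {} = (\<lambda>_. undefined)}. p V g)"
      using MR[of "{}" V "\<lambda>_. undefined"] that by simp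
    moreover have "{g \<in> V \<rightarrow>\<^sub>E univ A. restrict g {} = (\<lambda>_. undefined)} = V \<rightarrow>\<^sub>E univ A"
      by (auto simp: restrict_def)
    moreover have "p {} (\<lambda>_. undefined) = 1" unfolding p_def gr_def mono_def by simp
    ultimately show ?thesis by simp
  qed
  have P1: "p V f \<le> 1" if "V \<subseteq> univ X" "V \<noteq> {}" "card V \<le> k" "f \<in> V \<rightarrow>\<^sub>E univ A" for V f
  proof -
    have fV: "finite V" using that fin finite_subset by blast
    have "p V f \<le> (\<Sum>f\<in>V \<rightarrow>\<^sub>E univ A. p V f)"
      by (rule member_le_sum) (use that P0 fV fin in \<open>auto intro: finite_PiE\<close>)
    then show ?thesis using PS that by simp
  qed
  have c1: "\<forall>V f. V \<subseteq> univ X \<and> 1 \<le> card V \<and> card V \<le> k \<and> f \<in> V \<rightarrow>\<^sub>E univ A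
          \<longrightarrow> 0 \<le> p V f \<and> p V f \<le> 1"
  proof (intro allI impI)
    fix V f assume a: "V \<subseteq> univ X \<and> 1 \<le> card V \<and> card V \<le> k \<and> f \<in> V \<rightarrow>\<^sub>E univ A"
    then have "V \<noteq> {}" by auto
    then show "0 \<le> p V f \<and> p V f \<le> 1" using a P0[of V f] P1[of V f] by simp
  qed
  have c2: "\<forall>R xs f. R \<in> sig \<and> xs \<in> rels X R \<and> f \<in> set xs \<rightarrow>\<^sub>E univ A
          \<longrightarrow> 0 \<le> q R xs f \<and> q R xs f \<le> 1"
  proof (intro allI impI)
    fix R xs f assume a: "R \<in> sig \<and> xs \<in> rels X R \<and> f \<in> set xs \<rightarrow>\<^sub>E univ A"
    have s: "set xs \<subseteq> univ X" "set xs \<noteq> {}" "card (set xs) \<le> k"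
      using rel_facts[OF sig sX, of R xs] a r by auto
    show "0 \<le> q R xs f \<and> q R xs f \<le> 1" unfolding q_def using s a P0[of "set xs" f] P1[of "set xs" f] by simp
  qed
  have c3: "\<forall>V. V \<subseteq> univ X \<and> 1 \<le> card V \<and> card V \<le> k
          \<longrightarrow> (\<Sum>f\<in>V \<rightarrow>\<^sub>E univ A. p V f) = 1"
    using PS by blast
  have c4: "\<forall>U V f. U \<noteq> {} \<and> U \<subseteq> V \<and> V \<subseteq> univ X \<and> card V \<le> k \<and> f \<in> U \<rightarrow>\<^sub>E univ A
          \<longrightarrow> p U f = (\<Sum>g\<in>{g \<in> V \<rightarrow>\<^sub>E univ A. restrict g U = f}. p V g)"
    using MR by blast
  have c5: "\<forall>R xs U f. R \<in> sig \<and> xs \<in> rels X R \<and> U \<noteq> {} \<and> U \<subseteq> set xs \<and> card U \<le> k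
          \<and> f \<in> U \<rightarrow>\<^sub>E univ A
          \<longrightarrow> p U f = (\<Sum>g\<in>{g \<in> set xs \<rightarrow>\<^sub>E univ A. restrict g U = f}. q R xs g)"
  proof (intro allI impI)
    fix R xs U f assume a: "R \<in> sig \<and> xs \<in> rels X R \<and> U \<noteq> {} \<and> U \<subseteq> set xs \<and> card U \<le> k
          \<and> f \<in> U \<rightarrow>\<^sub>E univ A"
    have s: "set xs \<subseteq> univ X" "set xs \<noteq> {}" "card (set xs) \<le> k"
      using rel_facts[OF sig sX, of R xs] a r by auto
    have "p U f = (\<Sum>g\<in>{g \<in> set xs \<rightarrow>\<^sub>E univ A. restrict g U = f}. p (set xs) g)"
      using s a MR[of U "set xs" f] by simp
    then show "p U f = (\<Sum>g\<in>{g \<in> set xs \<rightarrow>\<^sub>E univ A. restrict g U = f}. q R xs g)"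
      unfolding q_def by simp
  qed
  have c6: "\<forall>R xs f. R \<in> sig \<and> xs \<in> rels X R \<and> f \<in> set xs \<rightarrow>\<^sub>E univ A
          \<and> map f xs \<notin> rels A R \<longrightarrow> q R xs f = 0"
  proof (intro allI impI)
    fix R xs f assume a: "R \<in> sig \<and> xs \<in> rels X R \<and> f \<in> set xs \<rightarrow>\<^sub>E univ A \<and> map f xs \<notin> rels A R"
    have s: "set xs \<subseteq> univ X" "set xs \<noteq> {}" "card (set xs) \<le> k"
      using rel_facts[OF sig sX, of R xs] a r by auto
    have "z (gr (set xs) f) = 0" using a s z_zero[OF z fin, of R xs f] by simp
    moreover have "gr (set xs) f \<noteq> {}" using s unfolding gr_def by simp
    ultimately show "q R xs f = 0" unfolding q_def p_def mono_def by simp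
  qed
  show ?thesis by (rule sa_intro[OF c1 c2 c3 c4 c5 c6])
qed

lemma gr_mem[simp]: "(x, a) \<in> gr W g \<longleftrightarrow> x \<in> W \<and> a = g x"
  unfolding gr_def by auto

lemma altsum:
  assumes "finite T"
  shows "(\<Sum>S\<in>Pow T. (-1::real) ^ card S) = (if T = {} then 1 else 0)"
proof -
  have "(\<Prod>x\<in>T. (1::real) - 1) = (\<Sum>S\<in>Pow T. (-1) ^ card S * (\<Prod>x\<in>S. 1) * (\<Prod>x\<in>T-S. 1))"
    by (rule prod_diff_conv_sum[OF assms])
  then show ?thesis using assms by (cases "T = {}") (auto simp: zero_power card_gt_0_iff)
qed

lemma max_arity_ge1: "signature sig ar \<Longrightarrow> 1 \<le> max_arity sig ar"
  unfolding max_arity_def signature_def by (auto intro: Max_ge)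

definition functional :: "('x \<times> 'y) set \<Rightarrow> bool" where
  "functional K \<longleftrightarrow> (\<forall>x a b. (x, a) \<in> K \<longrightarrow> (x, b) \<in> K \<longrightarrow> a = b)"

definition fun_of :: "('x \<times> 'y) set \<Rightarrow> 'x \<Rightarrow> 'y" where
  "fun_of K = (\<lambda>x. if x \<in> fst ` K then (SOME a. (x, a) \<in> K) else undefined)"

definition zz :: "('x set \<Rightarrow> ('x \<Rightarrow> 'y) \<Rightarrow> real) \<Rightarrow> ('x \<times> 'y) set \<Rightarrow> real" where
  "zz p K = (if functional K then p (fst ` K) (fun_of K) else 0)"

locale sasol =
  fixes sig :: "'r set" and ar :: "'r \<Rightarrow> nat" and X :: "('r, 'x) sstruct" and A :: "('r, 'y) sstruct"
    and KK :: nat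
    and p :: "'x set \<Rightarrow> ('x \<Rightarrow> 'y) \<Rightarrow> real" and q :: "'r \<Rightarrow> 'x list \<Rightarrow> ('x \<Rightarrow> 'y) \<Rightarrow> real"
  assumes sigok: "signature sig ar" and sX: "is_struct sig ar X" and sA: "is_struct sig ar A"
    and rKK: "max_arity sig ar \<le> KK"
    and P0: "\<And>V f. V \<subseteq> univ X \<Longrightarrow> 1 \<le> card V \<Longrightarrow> card V \<le> KK \<Longrightarrow> f \<in> V \<rightarrow>\<^sub>E univ A \<Longrightarrow> 0 \<le> p V f"
    and PS: "\<And>V. V \<subseteq> univ X \<Longrightarrow> 1 \<le> card V \<Longrightarrow> card V \<le> KK \<Longrightarrow> (\<Sum>f\<in>V \<rightarrow>\<^sub>E univ A. p V f) = 1"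
    and PM: "\<And>U V f. U \<noteq> {} \<Longrightarrow> U \<subseteq> V \<Longrightarrow> V \<subseteq> univ X \<Longrightarrow> card V \<le> KK \<Longrightarrow> f \<in> U \<rightarrow>\<^sub>E univ A
       \<Longrightarrow> p U f = (\<Sum>g\<in>{g \<in> V \<rightarrow>\<^sub>E univ A. restrict g U = f}. p V g)"
    and PQ: "\<And>R xs U f. R \<in> sig \<Longrightarrow> xs \<in> rels X R \<Longrightarrow> U \<noteq> {} \<Longrightarrow> U \<subseteq> set xs \<Longrightarrow> card U \<le> KK
       \<Longrightarrow> f \<in> U \<rightarrow>\<^sub>E univ A \<Longrightarrow> p U f = (\<Sum>g\<in>{g \<in> set xs \<rightarrow>\<^sub>E univ A. restrict g U = f}. q R xs g)"
    and PZ: "\<And>R xs f. R \<in> sig \<Longrightarrow> xs \<in> rels X R \<Longrightarrow> f \<in> set xs \<rightarrow>\<^sub>E univ A \<Longrightarrow> map f xs \<notin> rels A R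
       \<Longrightarrow> q R xs f = 0"
begin

lemma finX: "finite (univ X)" and finA: "finite (univ A)"
  using sX sA by (simp_all add: struct_fin)

lemma E:
  assumes W: "W \<subseteq> univ X" "W \<noteq> {}" "card W \<le> KK"
    and K: "K \<subseteq> univ X \<times> univ A" "fst ` K \<subseteq> W"
  shows "mono (zz p) K = (\<Sum>g\<in>W \<rightarrow>\<^sub>E univ A. p W g * of_bool (K \<subseteq> gr W g))"
proof -
  have fW: "finite W" using W finX finite_subset by blast
  have cW: "1 \<le> card W" using fW W by (simp add: Suc_le_eq card_gt_0_iff)
  show ?thesis
  proof (cases "K = {}")
    case True
    then show ?thesis using PS[OF W(1) cW W(3)] by (simp add: mono_def)
  next
    case Kne: False
    show ?thesis
    proof (cases "functional K")
      case True
      define U where "U = fst ` K"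
      define f where "f = fun_of K"
      have fx: "(x, f x) \<in> K" if xU: "x \<in> U" for x
      proof -
        obtain a where a: "(x, a) \<in> K" using xU unfolding U_def by force
        have "(x, SOME a. (x, a) \<in> K) \<in> K" by (rule someI) (rule a)
        then show ?thesis using xU unfolding f_def fun_of_def U_def by simp
      qed
      have fu: "f x = a" if xa: "(x, a) \<in> K" for x a
      proof -
        have xU: "x \<in> U" using xa unfolding U_def by force
        have "(x, f x) \<in> K" by (rule fx[OF xU])
        then show ?thesis using True xa unfolding functional_def by blast
      qed
      have fU: "f \<in> U \<rightarrow>\<^sub>E univ A"
      proof
        fix x assume "x \<in> U" then show "f x \<in> univ A" using fx K by blast
      next
        fix x assume "x \<notin> U" then show "f x = undefined" unfolding f_def fun_of_def U_def by simp
      qed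
      have key: "K \<subseteq> gr W g \<longleftrightarrow> restrict g U = f" if g: "g \<in> W \<rightarrow>\<^sub>E univ A" for g
      proof
        assume a: "K \<subseteq> gr W g"
        show "restrict g U = f"
        proof
          fix x show "restrict g U x = f x"
          proof (cases "x \<in> U")
            case True then show ?thesis using fx[OF True] a by auto
          next
            case False then show ?thesis using fU by (auto simp: PiE_def extensional_def)
          qed
        qed
      next
        assume a: "restrict g U = f"
        show "K \<subseteq> gr W g"
        proof
          fix l assume l: "l \<in> K"
          obtain x b where xb: "l = (x, b)" by (cases l)
          have xU: "x \<in> U" using l xb unfolding U_def by force
          have "g x = f x" using a xU by (metis restrict_apply')
          moreover have "f x = b" using fu l xb by simp
          moreover have "x \<in> W" using xU K unfolding U_def by blast
          ultimately show "l \<in> gr W g" using xb by simp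
        qed
      qed
      have "(\<Sum>g\<in>W \<rightarrow>\<^sub>E univ A. p W g * of_bool (K \<subseteq> gr W g))
          = (\<Sum>g\<in>W \<rightarrow>\<^sub>E univ A. if restrict g U = f then p W g else 0)"
        by (rule sum.cong) (auto simp: key)
      also have "\<dots> = (\<Sum>g\<in>{g \<in> W \<rightarrow>\<^sub>E univ A. restrict g U = f}. p W g)"
        by (rule sum.inter_filter[symmetric]) (use fW finA in \<open>auto intro: finite_PiE\<close>)
      also have "\<dots> = p U f"
        by (rule PM[symmetric]) (use Kne W K fU in \<open>auto simp: U_def\<close>)
      also have "p U f = mono (zz p) K" using Kne True unfolding mono_def zz_def U_def f_def by simp
      finally show ?thesis by simp
    next
      case False
      then obtain x a b where ab: "(x, a) \<in> K" "(x, b) \<in> K" "a \<noteq> b" unfolding functional_def by blast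
      have "\<not> K \<subseteq> gr W g" for g
      proof
        assume "K \<subseteq> gr W g"
        then have "(x, a) \<in> gr W g" "(x, b) \<in> gr W g" using ab by blast+
        then show False using ab(3) by simp
      qed
      then show ?thesis using False Kne unfolding mono_def zz_def by simp
    qed
  qed
qed


lemma inn_nonneg:
  assumes "finite J"
  shows "0 \<le> (\<Sum>S\<in>Pow J. (-1::real) ^ card S * of_bool (I \<union> S \<subseteq> G))"
proof -
  have "(\<Sum>S\<in>Pow J. (-1::real) ^ card S * of_bool (I \<union> S \<subseteq> G))
      = of_bool (I \<subseteq> G) * (\<Sum>S\<in>Pow J. if S \<subseteq> G then (-1::real) ^ card S else 0)"
    by (subst sum_distrib_left, rule sum.cong) auto
  also have "(\<Sum>S\<in>Pow J. if S \<subseteq> G then (-1::real) ^ card S else 0) = (\<Sum>S\<in>{S \<in> Pow J. S \<subseteq> G}. (-1::real) ^ card S)"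
    by (rule sum.inter_filter[symmetric]) (simp add: assms)
  also have "{S \<in> Pow J. S \<subseteq> G} = Pow (J \<inter> G)" by auto
  also have "(\<Sum>S\<in>Pow (J \<inter> G). (-1::real) ^ card S) = (if J \<inter> G = {} then 1 else 0)"
    using assms by (intro altsum) auto
  finally show ?thesis by simp
qed

lemma lin_nonneg:
  assumes W: "W \<subseteq> univ X" "W \<noteq> {}" "card W \<le> KK"
    and IJ: "I \<subseteq> univ X \<times> univ A" "J \<subseteq> univ X \<times> univ A" "fst ` (I \<union> J) \<subseteq> W"
    and csupp: "\<And>l. l \<in> univ X \<times> univ A \<Longrightarrow> c l \<noteq> 0 \<Longrightarrow> fst l \<in> W"
    and good: "\<And>g. g \<in> W \<rightarrow>\<^sub>E univ A \<Longrightarrow> p W g \<noteq> 0 \<Longrightarrow> b \<le> (\<Sum>l\<in>univ X \<times> univ A. c l * of_bool (l \<in> gr W g))"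
  shows "0 \<le> (\<Sum>S\<in>Pow J. (-1) ^ card S *
              ((\<Sum>l\<in>univ X \<times> univ A. c l * mono (zz p) (I \<union> S \<union> {l})) - b * mono (zz p) (I \<union> S)))"
proof -
  define N where "N = univ X \<times> univ A"
  define \<Omega> where "\<Omega> = W \<rightarrow>\<^sub>E univ A"
  define L where "L g = (\<Sum>l\<in>N. c l * of_bool (l \<in> gr W g))" for g
  have fN: "finite N" unfolding N_def using finX finA by simp
  have fW: "finite W" using W finX finite_subset by blast
  have fO: "finite \<Omega>" unfolding \<Omega>_def using fW finA by (auto intro: finite_PiE)
  have fJ: "finite J" using IJ fN finite_subset unfolding N_def by blast
  have cW: "1 \<le> card W" using fW W by (simp add: Suc_le_eq card_gt_0_iff)
  have E2: "mono (zz p) (I \<union> S) = (\<Sum>g\<in>\<Omega>. p W g * of_bool (I \<union> S \<subseteq> gr W g))" if S: "S \<subseteq> J" for S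
  proof -
    have "fst ` (I \<union> S) \<subseteq> W" using IJ(3) S by (metis Un_mono image_mono order_trans subset_refl)
    moreover have "I \<union> S \<subseteq> univ X \<times> univ A" using IJ S by blast
    ultimately show ?thesis unfolding \<Omega>_def by (intro E[OF W])
  qed
  have E1: "(\<Sum>l\<in>N. c l * mono (zz p) (I \<union> S \<union> {l})) = (\<Sum>g\<in>\<Omega>. p W g * of_bool (I \<union> S \<subseteq> gr W g) * L g)"
    if S: "S \<subseteq> J" for S
  proof -
    have "(\<Sum>l\<in>N. c l * mono (zz p) (I \<union> S \<union> {l}))
        = (\<Sum>l\<in>N. \<Sum>g\<in>\<Omega>. c l * (p W g * of_bool (I \<union> S \<subseteq> gr W g) * of_bool (l \<in> gr W g)))"
    proof (rule sum.cong[OF refl])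
      fix l assume l: "l \<in> N"
      show "c l * mono (zz p) (I \<union> S \<union> {l}) = (\<Sum>g\<in>\<Omega>. c l * (p W g * of_bool (I \<union> S \<subseteq> gr W g) * of_bool (l \<in> gr W g)))"
      proof (cases "c l = 0")
        case True then show ?thesis by simp
      next
        case False
        then have "fst l \<in> W" using csupp l unfolding N_def by blast
        then have "mono (zz p) (I \<union> S \<union> {l}) = (\<Sum>g\<in>\<Omega>. p W g * of_bool (I \<union> S \<union> {l} \<subseteq> gr W g))"
        proof -
          have "fst ` (I \<union> S) \<subseteq> W" using IJ(3) S by (metis Un_mono image_mono order_trans subset_refl)
          then have "fst ` (I \<union> S \<union> {l}) \<subseteq> W" using \<open>fst l \<in> W\<close> by auto
          moreover have "I \<union> S \<union> {l} \<subseteq> univ X \<times> univ A" using IJ S l unfolding N_def by blast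
          ultimately show ?thesis unfolding \<Omega>_def by (intro E[OF W])
        qed
        also have "\<dots> = (\<Sum>g\<in>\<Omega>. p W g * of_bool (I \<union> S \<subseteq> gr W g) * of_bool (l \<in> gr W g))"
          by (rule sum.cong) auto
        finally show ?thesis by (simp add: sum_distrib_left)
      qed
    qed
    also have "\<dots> = (\<Sum>g\<in>\<Omega>. \<Sum>l\<in>N. c l * (p W g * of_bool (I \<union> S \<subseteq> gr W g) * of_bool (l \<in> gr W g)))"
      by (rule sum.swap)
    also have "\<dots> = (\<Sum>g\<in>\<Omega>. p W g * of_bool (I \<union> S \<subseteq> gr W g) * L g)"
      unfolding L_def by (rule sum.cong[OF refl]) (simp add: sum_distrib_left algebra_simps)
    finally show ?thesis .
  qed
  have "(\<Sum>S\<in>Pow J. (-1) ^ card S *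
              ((\<Sum>l\<in>N. c l * mono (zz p) (I \<union> S \<union> {l})) - b * mono (zz p) (I \<union> S)))
      = (\<Sum>S\<in>Pow J. \<Sum>g\<in>\<Omega>. (-1) ^ card S * of_bool (I \<union> S \<subseteq> gr W g) * (p W g * (L g - b)))"
  proof (rule sum.cong[OF refl])
    fix S assume "S \<in> Pow J"
    then have S: "S \<subseteq> J" by simp
    have "(\<Sum>l\<in>N. c l * mono (zz p) (I \<union> S \<union> {l})) - b * mono (zz p) (I \<union> S)
        = (\<Sum>g\<in>\<Omega>. of_bool (I \<union> S \<subseteq> gr W g) * (p W g * (L g - b)))"
      unfolding E1[OF S] E2[OF S] by (simp add: sum_distrib_left sum_subtractf[symmetric] algebra_simps)
    then show "(-1) ^ card S * ((\<Sum>l\<in>N. c l * mono (zz p) (I \<union> S \<union> {l})) - b * mono (zz p) (I \<union> S))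
        = (\<Sum>g\<in>\<Omega>. (-1) ^ card S * of_bool (I \<union> S \<subseteq> gr W g) * (p W g * (L g - b)))"
      by (simp add: sum_distrib_left algebra_simps)
  qed
  also have "\<dots> = (\<Sum>g\<in>\<Omega>. \<Sum>S\<in>Pow J. (-1) ^ card S * of_bool (I \<union> S \<subseteq> gr W g) * (p W g * (L g - b)))"
    by (rule sum.swap)
  also have "\<dots> = (\<Sum>g\<in>\<Omega>. (\<Sum>S\<in>Pow J. (-1) ^ card S * of_bool (I \<union> S \<subseteq> gr W g)) * (p W g * (L g - b)))"
    by (simp add: sum_distrib_right)
  also have "0 \<le> \<dots>"
  proof (rule sum_nonneg)
    fix g assume g: "g \<in> \<Omega>"
    have "0 \<le> p W g * (L g - b)"
    proof (cases "p W g = 0")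
      case True then show ?thesis by simp
    next
      case False
      have "0 \<le> p W g" using P0[OF W(1) cW W(3)] g unfolding \<Omega>_def by blast
      moreover have "b \<le> L g" using good[OF _ False] g unfolding \<Omega>_def L_def N_def by blast
      ultimately show ?thesis by simp
    qed
    then show "0 \<le> (\<Sum>S\<in>Pow J. (-1) ^ card S * of_bool (I \<union> S \<subseteq> gr W g)) * (p W g * (L g - b))"
      using inn_nonneg[OF fJ] by simp
  qed
  finally show ?thesis unfolding N_def .
qed

end

lemma poly_ineqsE:
  assumes "(c, b) \<in> poly_ineqs sig X A"
  obtains (eq1) x where "x \<in> univ X" "c = (\<lambda>(x', a). if x' = x then 1 else 0)" "b = 1"
  | (eq2) x where "x \<in> univ X" "c = (\<lambda>(x', a). if x' = x then -1 else 0)" "b = -1"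
  | (con) R xs f where "R \<in> sig" "xs \<in> rels X R" "f \<in> set xs \<rightarrow>\<^sub>E univ A" "map f xs \<notin> rels A R"
      "c = (\<lambda>(x', a). if x' \<in> set xs \<and> a = f x' then -1 else 0)" "b = - (real (card (set xs)) - 1)"
  | (b1) i where "i \<in> univ X \<times> univ A" "c = (\<lambda>j. if j = i then 1 else 0)" "b = 0"
  | (b2) i where "i \<in> univ X \<times> univ A" "c = (\<lambda>j. if j = i then -1 else 0)" "b = -1"
  using assms unfolding poly_ineqs_def
  apply (elim UnE CollectE exE conjE)
  apply (simp_all only: prod.inject)
  apply (elim conjE; blast)+
  done

context sasol begin

definition goodcb :: "('x \<times> 'y \<Rightarrow> real) \<Rightarrow> real \<Rightarrow> bool" where
  "goodcb c b \<longleftrightarrow> (\<exists>V. V \<subseteq> univ X \<and> V \<noteq> {} \<and> card V \<le> max_arity sig ar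
     \<and> (\<forall>l\<in>univ X \<times> univ A. c l \<noteq> 0 \<longrightarrow> fst l \<in> V)
     \<and> (\<forall>W g. V \<subseteq> W \<and> W \<subseteq> univ X \<and> card W \<le> KK \<and> g \<in> W \<rightarrow>\<^sub>E univ A \<and> p W g \<noteq> 0
          \<longrightarrow> b \<le> (\<Sum>l\<in>univ X \<times> univ A. c l * of_bool (l \<in> gr W g))))"

lemma good_eq:
  assumes x: "x \<in> univ X"
  shows "goodcb (\<lambda>(x', a). if x' = x then t else 0) t"
  unfolding goodcb_def
proof (intro exI[of _ "{x}"] conjI allI impI ballI)
  show "{x} \<subseteq> univ X" using x by simp
  show "card {x} \<le> max_arity sig ar" using max_arity_ge1[OF sigok] by simp
  fix l assume "l \<in> univ X \<times> univ A" "(case l of (x', a) \<Rightarrow> if x' = x then t else 0) \<noteq> 0"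
  then show "fst l \<in> {x}" by (cases l) (auto split: if_splits)
next
  fix W g assume a: "{x} \<subseteq> W \<and> W \<subseteq> univ X \<and> card W \<le> KK \<and> g \<in> W \<rightarrow>\<^sub>E univ A \<and> p W g \<noteq> 0"
  have "(\<Sum>l\<in>univ X \<times> univ A. (case l of (x', a) \<Rightarrow> if x' = x then t else 0) * of_bool (l \<in> gr W g))
      = t * (\<Sum>a\<in>univ A. of_bool ((x, a) \<in> gr W g))"
    by (rule sum_row[OF x finX finA])
  also have "(\<Sum>a\<in>univ A. of_bool ((x, a) \<in> gr W g)) = (\<Sum>a\<in>univ A. of_bool (a = g x) :: real)"
    using a by simp
  also have "\<dots> = 1"
  proof -
    have "g x \<in> univ A" using a by auto
    then have "univ A \<inter> {a. a = g x} = {g x}" by auto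
    then show ?thesis using finA by simp
  qed
  finally show "t \<le> (\<Sum>l\<in>univ X \<times> univ A. (case l of (x', a) \<Rightarrow> if x' = x then t else 0) * of_bool (l \<in> gr W g))"
    by simp
qed simp

lemma good_b1:
  assumes i: "i \<in> univ X \<times> univ A"
  shows "goodcb (\<lambda>j. if j = i then 1 else 0) 0"
  unfolding goodcb_def
proof (intro exI[of _ "{fst i}"] conjI allI impI ballI)
  show "{fst i} \<subseteq> univ X" using i by auto
  show "card {fst i} \<le> max_arity sig ar" using max_arity_ge1[OF sigok] by simp
  fix l assume "l \<in> univ X \<times> univ A" "(if l = i then 1 else 0::real) \<noteq> 0"
  then show "fst l \<in> {fst i}" by (auto split: if_splits)
next
  fix W g
  show "0 \<le> (\<Sum>l\<in>univ X \<times> univ A. (if l = i then 1 else 0) * (of_bool (l \<in> gr W g)::real))"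
    by (rule sum_nonneg) simp
qed simp

lemma good_b2:
  assumes i: "i \<in> univ X \<times> univ A"
  shows "goodcb (\<lambda>j. if j = i then -1 else 0) (-1)"
  unfolding goodcb_def
proof (intro exI[of _ "{fst i}"] conjI allI impI ballI)
  show "{fst i} \<subseteq> univ X" using i by auto
  show "card {fst i} \<le> max_arity sig ar" using max_arity_ge1[OF sigok] by simp
  fix l assume "l \<in> univ X \<times> univ A" "(if l = i then -1 else 0::real) \<noteq> 0"
  then show "fst l \<in> {fst i}" by (auto split: if_splits)
next
  fix W g
  have "(\<Sum>l\<in>univ X \<times> univ A. (if l = i then -1 else 0) * (of_bool (l \<in> gr W g)::real))
      = (\<Sum>l\<in>univ X \<times> univ A. if l = i then - of_bool (l \<in> gr W g) else (0::real))"
    by (rule sum.cong) auto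
  also have "\<dots> = - of_bool (i \<in> gr W g)" using i finX finA by (subst sum.delta) auto
  finally show "-1 \<le> (\<Sum>l\<in>univ X \<times> univ A. (if l = i then -1 else 0) * (of_bool (l \<in> gr W g)::real))"
    by simp
qed simp

lemma good_con:
  assumes R: "R \<in> sig" "xs \<in> rels X R" "f \<in> set xs \<rightarrow>\<^sub>E univ A" "map f xs \<notin> rels A R"
  shows "goodcb (\<lambda>(x', a). if x' \<in> set xs \<and> a = f x' then -1 else 0) (- (real (card (set xs)) - 1))"
proof -
  have s: "set xs \<subseteq> univ X" "set xs \<noteq> {}" "card (set xs) \<le> max_arity sig ar"
    using rel_facts[OF sigok sX R(1,2)] by auto
  define K where "K = gr (set xs) f"
  have KN: "K \<subseteq> univ X \<times> univ A" using R s unfolding K_def gr_def by auto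
  have fK: "finite K" using KN finX finA by (meson finite_SigmaI finite_subset)
  have cK: "card K = card (set xs)" unfolding K_def gr_def
    by (rule card_image) (auto simp: inj_on_def)
  show ?thesis unfolding goodcb_def
  proof (intro exI[of _ "set xs"] conjI allI impI ballI)
    fix l assume "l \<in> univ X \<times> univ A" "(case l of (x', a) \<Rightarrow> if x' \<in> set xs \<and> a = f x' then -1 else (0::real)) \<noteq> 0"
    then show "fst l \<in> set xs" by (cases l) (auto split: if_splits)
  next
    fix W g assume a: "set xs \<subseteq> W \<and> W \<subseteq> univ X \<and> card W \<le> KK \<and> g \<in> W \<rightarrow>\<^sub>E univ A \<and> p W g \<noteq> 0"
    have fW: "finite W" using a finX finite_subset by blast
    have cW: "1 \<le> card W" using fW a s by (metis One_nat_def Suc_leI card_gt_0_iff subset_empty)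
    have nsub: "\<not> K \<subseteq> gr W g"
    proof
      assume sub: "K \<subseteq> gr W g"
      have rg: "restrict g (set xs) = f"
      proof
        fix x show "restrict g (set xs) x = f x"
        proof (cases "x \<in> set xs")
          case True
          then have "(x, f x) \<in> K" unfolding K_def gr_def by auto
          then have "f x = g x" using sub by auto
          then show ?thesis using True by simp
        next
          case False then show ?thesis using R(3) by (auto simp: PiE_def extensional_def)
        qed
      qed
      have cx: "card (set xs) \<le> KK" using s rKK by simp
      have "p (set xs) f = (\<Sum>h\<in>{h \<in> set xs \<rightarrow>\<^sub>E univ A. restrict h (set xs) = f}. q R xs h)"
        by (rule PQ[OF R(1,2) s(2) subset_refl cx R(3)])
      also have "{h \<in> set xs \<rightarrow>\<^sub>E univ A. restrict h (set xs) = f} = {f}" using R(3) by auto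
      finally have p0: "p (set xs) f = 0" using PZ[OF R] by simp
      have "p (set xs) f = (\<Sum>h\<in>{h \<in> W \<rightarrow>\<^sub>E univ A. restrict h (set xs) = f}. p W h)"
        by (rule PM) (use s a R in auto)
      also have "\<dots> \<ge> p W g"
      proof (rule member_le_sum)
        show "g \<in> {h \<in> W \<rightarrow>\<^sub>E univ A. restrict h (set xs) = f}" using a rg by simp
        have "finite (W \<rightarrow>\<^sub>E univ A)" using fW finA by (intro finite_PiE) auto
        then show "finite {h \<in> W \<rightarrow>\<^sub>E univ A. restrict h (set xs) = f}" by simp
        fix h assume "h \<in> {h \<in> W \<rightarrow>\<^sub>E univ A. restrict h (set xs) = f} - {g}"
        then show "0 \<le> p W h" using P0[of W h] a cW by auto
      qed
      finally have "p W g \<le> 0" using p0 by simp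
      moreover have "0 \<le> p W g" using P0[of W g] a cW by auto
      ultimately show False using a by simp
    qed
    have cl: "(case l of (x', a) \<Rightarrow> if x' \<in> set xs \<and> a = f x' then -1 else 0) = (if l \<in> K then -1 else (0::real))" for l
      unfolding K_def gr_def by (cases l) auto
    have "(\<Sum>l\<in>univ X \<times> univ A. (case l of (x', a) \<Rightarrow> if x' \<in> set xs \<and> a = f x' then -1 else 0) * of_bool (l \<in> gr W g))
        = (\<Sum>l\<in>univ X \<times> univ A. if l \<in> K then - of_bool (l \<in> gr W g) else (0::real))"
      by (rule sum.cong) (auto simp: cl)
    also have "\<dots> = (\<Sum>l\<in>(univ X \<times> univ A) \<inter> K. - of_bool (l \<in> gr W g))"
      using finX finA by (subst sum.inter_restrict) auto
    also have "(univ X \<times> univ A) \<inter> K = K" using KN by auto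
    also have "(\<Sum>l\<in>K. - of_bool (l \<in> gr W g)) = - real (card (K \<inter> {l. l \<in> gr W g}))"
      using fK by (simp add: sum_negf)
    finally have eq: "(\<Sum>l\<in>univ X \<times> univ A. (case l of (x', a) \<Rightarrow> if x' \<in> set xs \<and> a = f x' then -1 else 0) * of_bool (l \<in> gr W g))
        = - real (card (K \<inter> {l. l \<in> gr W g}))" .
    have "K \<inter> {l. l \<in> gr W g} \<subset> K" using nsub by auto
    then have "card (K \<inter> {l. l \<in> gr W g}) < card K" using fK by (rule psubset_card_mono[rotated])
    then have "real (card (K \<inter> {l. l \<in> gr W g})) \<le> real (card (set xs)) - 1" using cK by linarith
    then show "- (real (card (set xs)) - 1) \<le> (\<Sum>l\<in>univ X \<times> univ A. (case l of (x', a) \<Rightarrow> if x' \<in> set xs \<and> a = f x' then -1 else 0) * of_bool (l \<in> gr W g))"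
      unfolding eq by simp
  qed (use s in auto)
qed

lemma ineq_good:
  assumes cb: "(c, b) \<in> poly_ineqs sig X A"
  shows "goodcb c b"
  using cb
proof (cases rule: poly_ineqsE)
  case (eq1 x) then show ?thesis using good_eq[of x 1] by simp
next
  case (eq2 x) then show ?thesis using good_eq[of x "-1"] by simp
next
  case (con R xs f) then show ?thesis using good_con[of R xs f] by simp
next
  case (b1 i) then show ?thesis using good_b1[of i] by simp
next
  case (b2 i) then show ?thesis using good_b2[of i] by simp
qed

end

context sasol begin

lemma lift_member:
  assumes k: "1 \<le> k" and KKeq: "KK = k + max_arity sig ar - 1"
  shows "zz p \<in> sa_lift_L (univ X \<times> univ A) (poly_ineqs sig X A) k"
proof -
  have main: "0 \<le> (\<Sum>S\<in>Pow J. (-1) ^ card S *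
              ((\<Sum>l\<in>univ X \<times> univ A. c l * mono (zz p) (I \<union> S \<union> {l})) - b * mono (zz p) (I \<union> S)))"
    if cb: "(c, b) \<in> poly_ineqs sig X A" and IJ: "I \<subseteq> univ X \<times> univ A" "J \<subseteq> univ X \<times> univ A"
      "card (I \<union> J) \<le> k - 1" for c b I J
  proof -
    obtain V where V: "V \<subseteq> univ X" "V \<noteq> {}" "card V \<le> max_arity sig ar"
      and Vs: "\<forall>l\<in>univ X \<times> univ A. c l \<noteq> 0 \<longrightarrow> fst l \<in> V"
      and Vg: "\<forall>W g. V \<subseteq> W \<and> W \<subseteq> univ X \<and> card W \<le> KK \<and> g \<in> W \<rightarrow>\<^sub>E univ A \<and> p W g \<noteq> 0
          \<longrightarrow> b \<le> (\<Sum>l\<in>univ X \<times> univ A. c l * of_bool (l \<in> gr W g))"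
      using ineq_good[OF cb] unfolding goodcb_def by (elim exE conjE) (rule that)
    define W where "W = fst ` (I \<union> J) \<union> V"
    have fIJ: "finite (I \<union> J)" using IJ finX finA by (meson finite_SigmaI finite_subset Un_least)
    have W1: "W \<subseteq> univ X" unfolding W_def using IJ V by auto
    have W2: "W \<noteq> {}" unfolding W_def using V by auto
    have "card W \<le> card (fst ` (I \<union> J)) + card V" unfolding W_def by (rule card_Un_le)
    also have "card (fst ` (I \<union> J)) \<le> card (I \<union> J)" using fIJ by (rule card_image_le)
    finally have W3: "card W \<le> KK" using IJ(3) V(3) k KKeq by linarith
    have W4: "fst ` (I \<union> J) \<subseteq> W" unfolding W_def by auto
    show ?thesis
    proof (rule lin_nonneg[OF W1 W2 W3 IJ(1,2) W4])
      fix l assume "l \<in> univ X \<times> univ A" "c l \<noteq> 0"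
      then show "fst l \<in> W" using Vs unfolding W_def by auto
    next
      fix g assume g: "g \<in> W \<rightarrow>\<^sub>E univ A" "p W g \<noteq> 0"
      have VW: "V \<subseteq> W" unfolding W_def by auto
      show "b \<le> (\<Sum>l\<in>univ X \<times> univ A. c l * of_bool (l \<in> gr W g))"
        by (rule Vg[rule_format]) (intro conjI VW W1 W3 g)
    qed
  qed
  have H: "\<forall>(c, b)\<in>poly_ineqs sig X A. \<forall>I J. I \<subseteq> univ X \<times> univ A \<and> J \<subseteq> univ X \<times> univ A \<and> I \<inter> J = {}
      \<and> card (I \<union> J) \<le> k - 1 \<longrightarrow>
      0 \<le> (\<Sum>S\<in>Pow J. (-1) ^ card S *
              ((\<Sum>l\<in>univ X \<times> univ A. c l * mono (zz p) (I \<union> S \<union> {l})) - b * mono (zz p) (I \<union> S)))"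
  proof (intro ballI)
    fix cb assume cb: "cb \<in> poly_ineqs sig X A"
    obtain c b where cbe: "cb = (c, b)" by (cases cb)
    have "\<forall>I J. I \<subseteq> univ X \<times> univ A \<and> J \<subseteq> univ X \<times> univ A \<and> I \<inter> J = {}
      \<and> card (I \<union> J) \<le> k - 1 \<longrightarrow>
      0 \<le> (\<Sum>S\<in>Pow J. (-1) ^ card S *
              ((\<Sum>l\<in>univ X \<times> univ A. c l * mono (zz p) (I \<union> S \<union> {l})) - b * mono (zz p) (I \<union> S)))"
    proof (intro allI impI)
      fix I J assume a: "I \<subseteq> univ X \<times> univ A \<and> J \<subseteq> univ X \<times> univ A \<and> I \<inter> J = {} \<and> card (I \<union> J) \<le> k - 1"
      have cb': "(c, b) \<in> poly_ineqs sig X A" using cb cbe by simp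
      show "0 \<le> (\<Sum>S\<in>Pow J. (-1) ^ card S *
              ((\<Sum>l\<in>univ X \<times> univ A. c l * mono (zz p) (I \<union> S \<union> {l})) - b * mono (zz p) (I \<union> S)))"
        using a by (intro main[OF cb']) simp_all
    qed
    then show "case cb of (c, b) \<Rightarrow> \<forall>I J. I \<subseteq> univ X \<times> univ A \<and> J \<subseteq> univ X \<times> univ A \<and> I \<inter> J = {}
      \<and> card (I \<union> J) \<le> k - 1 \<longrightarrow>
      0 \<le> (\<Sum>S\<in>Pow J. (-1) ^ card S *
              ((\<Sum>l\<in>univ X \<times> univ A. c l * mono (zz p) (I \<union> S \<union> {l})) - b * mono (zz p) (I \<union> S)))"
      unfolding cbe by (simp only: prod.case)
  qed
  show ?thesis unfolding sa_lift_L_def by (rule CollectI) (rule H)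
qed

lemma part2_main:
  assumes k: "1 \<le> k" and KKeq: "KK = k + max_arity sig ar - 1"
  shows "polytope_SA sig X A k \<noteq> {}"
proof -
  define y where "y = (\<lambda>i. if i \<in> univ X \<times> univ A then zz p {i} else 0)"
  have "y \<in> polytope_SA sig X A k"
    unfolding polytope_SA_def sa_lift_def
  proof (intro CollectI conjI allI impI bexI[of _ "zz p"] ballI)
    show "zz p \<in> sa_lift_L (univ X \<times> univ A) (poly_ineqs sig X A) k" by (rule lift_member[OF k KKeq])
  qed (auto simp: y_def)
  then show ?thesis by blast
qed

end

lemma part2:
  fixes sig :: "'r set" and X :: "('r, 'x) sstruct" and A :: "('r, 'y) sstruct"
  assumes sig: "signature sig ar" and sX: "is_struct sig ar X" and sA: "is_struct sig ar A"
    and k: "1 \<le> k" and feas: "sa_feasible sig X A (k + max_arity sig ar - 1)"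
  shows "polytope_SA sig X A k \<noteq> {}"
proof -
  define KK where "KK = k + max_arity sig ar - 1"
  obtain p :: "'x set \<Rightarrow> ('x \<Rightarrow> 'y) \<Rightarrow> real" and q :: "'r \<Rightarrow> 'x list \<Rightarrow> ('x \<Rightarrow> 'y) \<Rightarrow> real" where
    c1: "\<forall>V f. V \<subseteq> univ X \<and> 1 \<le> card V \<and> card V \<le> KK \<and> f \<in> V \<rightarrow>\<^sub>E univ A
          \<longrightarrow> 0 \<le> p V f \<and> p V f \<le> 1" and
    c2: "\<forall>R xs f. R \<in> sig \<and> xs \<in> rels X R \<and> f \<in> set xs \<rightarrow>\<^sub>E univ A
          \<longrightarrow> 0 \<le> q R xs f \<and> q R xs f \<le> 1" and
    c3: "\<forall>V. V \<subseteq> univ X \<and> 1 \<le> card V \<and> card V \<le> KK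
          \<longrightarrow> (\<Sum>f\<in>V \<rightarrow>\<^sub>E univ A. p V f) = 1" and
    c4: "\<forall>U V f. U \<noteq> {} \<and> U \<subseteq> V \<and> V \<subseteq> univ X \<and> card V \<le> KK \<and> f \<in> U \<rightarrow>\<^sub>E univ A
          \<longrightarrow> p U f = (\<Sum>g\<in>{g \<in> V \<rightarrow>\<^sub>E univ A. restrict g U = f}. p V g)" and
    c5: "\<forall>R xs U f. R \<in> sig \<and> xs \<in> rels X R \<and> U \<noteq> {} \<and> U \<subseteq> set xs \<and> card U \<le> KK
          \<and> f \<in> U \<rightarrow>\<^sub>E univ A
          \<longrightarrow> p U f = (\<Sum>g\<in>{g \<in> set xs \<rightarrow>\<^sub>E univ A. restrict g U = f}. q R xs g)" and
    c6: "\<forall>R xs f. R \<in> sig \<and> xs \<in> rels X R \<and> f \<in> set xs \<rightarrow>\<^sub>E univ A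
          \<and> map f xs \<notin> rels A R \<longrightarrow> q R xs f = 0"
    using feas unfolding sa_feasible_def KK_def[symmetric] by (elim exE conjE) (rule that)
  interpret sasol sig ar X A KK p q
  proof
    show "max_arity sig ar \<le> KK" unfolding KK_def using k by simp
  next
    fix V f assume "V \<subseteq> univ X" "1 \<le> card V" "card V \<le> KK" "f \<in> V \<rightarrow>\<^sub>E univ A"
    then show "0 \<le> p V f" using c1 by blast
  next
    fix V assume "V \<subseteq> univ X" "1 \<le> card V" "card V \<le> KK"
    then show "(\<Sum>f\<in>V \<rightarrow>\<^sub>E univ A. p V f) = 1" using c3 by blast
  next
    fix U V f assume "U \<noteq> {}" "U \<subseteq> V" "V \<subseteq> univ X" "card V \<le> KK" "f \<in> U \<rightarrow>\<^sub>E univ A"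
    then show "p U f = (\<Sum>g\<in>{g \<in> V \<rightarrow>\<^sub>E univ A. restrict g U = f}. p V g)" using c4 by blast
  next
    fix R xs U f assume "R \<in> sig" "xs \<in> rels X R" "U \<noteq> {}" "U \<subseteq> set xs" "card U \<le> KK" "f \<in> U \<rightarrow>\<^sub>E univ A"
    then show "p U f = (\<Sum>g\<in>{g \<in> set xs \<rightarrow>\<^sub>E univ A. restrict g U = f}. q R xs g)" using c5 by blast
  next
    fix R xs f assume "R \<in> sig" "xs \<in> rels X R" "f \<in> set xs \<rightarrow>\<^sub>E univ A" "map f xs \<notin> rels A R"
    then show "q R xs f = 0" using c6 by blast
  qed (rule sig sX sA)+
  show ?thesis by (rule part2_main[OF k KK_def])
qed

theorem lemmaA1:
  fixes sig :: "'r set" and ar :: "'r \<Rightarrow> nat"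
    and X :: "('r, 'a) sstruct" and A :: "('r, 'b) sstruct" and k :: nat
  assumes "signature sig ar" and "is_struct sig ar X" and "is_struct sig ar A" and "1 \<le> k"
  shows "(polytope_SA sig X A k \<noteq> {} \<and> max_arity sig ar \<le> k \<longrightarrow> sa_feasible sig X A k)
       \<and> (sa_feasible sig X A (k + max_arity sig ar - 1) \<longrightarrow> polytope_SA sig X A k \<noteq> {})"
proof (intro conjI impI)
  assume a: "polytope_SA sig X A k \<noteq> {} \<and> max_arity sig ar \<le> k"
  then obtain y where "y \<in> polytope_SA sig X A k" by blast
  then show "sa_feasible sig X A k" using part1[OF assms(1-3)] a by blast
next
  assume "sa_feasible sig X A (k + max_arity sig ar - 1)"
  then show "polytope_SA sig X A k \<noteq> {}" using part2[OF assms(1-4)] by blast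
qed

end
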